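(* Let $L$ be a Lipschitz language, let $\mu$ be an ultracharge on a nonempty set $I$, let $(M_i)_{i\in I}$ be $L$-structures, and let $M=\prod_\mu M_i$ be their ultramean. Then for every affine $L$-formula $\phi(x_1,\dots,x_n)$ and all $[a^1_i],\dots,[a^n_i]\in M$, $$\phi^{M}([a^{1}_{i}],\ldots,[a^{n}_{i}])=\int\phi^{M_{i}}(a^{1}_{i},\ldots,a^{n}_{i})\,d\mu .$$
   Context: A Lipschitz language $L$ consists of constant symbols, function symbols and relation symbols; each function symbol $F$ (resp. relation symbol $R$) has an arity $n\ge 1$ and a Lipschitz constant $\lambda_F\ge0$ (resp. $\lambda_R\ge 0$); $L$ contains a binary relation symbol $d$ with $\lambda_d=1$. An $L$-structure is a complete metric space $(M,d)$ of diameter at most $1$ (with $d$ interpreting the symbol $d$) together with elements $c^M$ for constants, maps $F^M:M^n\to M$ with $d(F^M(\bar a),F^M(\bar b))\le\lambda_F d(\bar a,\bar b)$ and maps $R^M:M^n\to[0,1]$ with $R^M(\bar a)-R^M(\bar b)\le\lambda_R d(\bar a,\bar b)$, where $d(\bar a,\bar b)=\sum_i d(a_i,b_i)$ on $M^n$. Affine formulas are built from the atomic formulas $1$, $d(t_1,t_2)$, $R(t_1,\dots,t_n)$ ($t_j$ terms) by $\phi+\psi$, $r\phi$ ($r\in\mathbb R$), $\sup_x\phi$, $\inf_x\phi$; their values $\phi^M(\bar a)\in\mathbb R$ are defined in the evident way (sup/inf taken over $M$); the same definition of values applies to structures whose metric is only a pseudometric or not complete. An ultracharge on $I$ is a finitely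 additive probability measure on the full power set of $I$; every bounded real function on $I$ is integrable with respect to it. The ultramean $M=\prod_\mu M_i$: on $\prod_i M_i$ put the pseudometric $d((a_i),(b_i))=\int d_i(a_i,b_i)\,d\mu$, let $[a_i]$ denote the class of $(a_i)$ modulo distance $0$, let $M$ be the set of classes with the induced metric, and set $c^M=[c^{M_i}]$, $F^M([a^1_i],\dots,[a^n_i])=[F^{M_i}(a^1_i,\dots,a^n_i)]$, $R^M([a^1_i],\dots,[a^n_i])=\int R^{M_i}(a^1_i,\dots,a^n_i)\,d\mu$ (these are well defined; $M$ need not be metrically complete). *)

theory Defs
  imports "HOL-Analysis.Analysis" "HOL-Library.Disjoint_Sets"
begin

text \<open>Constant symbols are the elements of type 'c, function symbols the elements of
type 'f, relation symbols (other than the distinguished metric symbol d, which is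
built into the syntax as the atomic formula Dist) the elements of type 'r.\<close>

record ('f, 'r) lang =
  farity :: "'f \<Rightarrow> nat"
  rarity :: "'r \<Rightarrow> nat"
  flip   :: "'f \<Rightarrow> real"
  rlip   :: "'r \<Rightarrow> real"

definition lipschitz_language :: "('f, 'r) lang \<Rightarrow> bool" where
  "lipschitz_language L \<longleftrightarrow>
     (\<forall>F. farity L F \<ge> 1 \<and> flip L F \<ge> 0) \<and> (\<forall>R. rarity L R \<ge> 1 \<and> rlip L R \<ge> 0)"

datatype ('c, 'f) trm = Var nat | Const 'c | Fn 'f "('c, 'f) trm list"

datatype ('c, 'f, 'r) afml =
    One
  | Dist "('c, 'f) trm" "('c, 'f) trm"
  | Rel 'r "('c, 'f) trm list"
  | Add "('c, 'f, 'r) afml" "('c, 'f, 'r) afml"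
  | Scale real "('c, 'f, 'r) afml"
  | FSup nat "('c, 'f, 'r) afml"
  | FInf nat "('c, 'f, 'r) afml"

fun wf_trm :: "('f, 'r) lang \<Rightarrow> ('c, 'f) trm \<Rightarrow> bool" where
  "wf_trm L (Var n) = True"
| "wf_trm L (Const c) = True"
| "wf_trm L (Fn F ts) = (length ts = farity L F \<and> (\<forall>t\<in>set ts. wf_trm L t))"

fun wf_fml :: "('f, 'r) lang \<Rightarrow> ('c, 'f, 'r) afml \<Rightarrow> bool" where
  "wf_fml L One = True"
| "wf_fml L (Dist t u) = (wf_trm L t \<and> wf_trm L u)"
| "wf_fml L (Rel R ts) = (length ts = rarity L R \<and> (\<forall>t\<in>set ts. wf_trm L t))"
| "wf_fml L (Add \<phi> \<psi>) = (wf_fml L \<phi> \<and> wf_fml L \<psi>)"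
| "wf_fml L (Scale r \<phi>) = wf_fml L \<phi>"
| "wf_fml L (FSup x \<phi>) = wf_fml L \<phi>"
| "wf_fml L (FInf x \<phi>) = wf_fml L \<phi>"

record ('a, 'c, 'f, 'r) lstruct =
  carrier :: "'a set"
  sdist   :: "'a \<Rightarrow> 'a \<Rightarrow> real"
  cinterp :: "'c \<Rightarrow> 'a"
  finterp :: "'f \<Rightarrow> 'a list \<Rightarrow> 'a"
  rinterp :: "'r \<Rightarrow> 'a list \<Rightarrow> real"

definition list_dist :: "('a \<Rightarrow> 'a \<Rightarrow> real) \<Rightarrow> 'a list \<Rightarrow> 'a list \<Rightarrow> real" where
  "list_dist d xs ys = sum_list (map2 d xs ys)"

definition is_Lstructure :: "('f, 'r) lang \<Rightarrow> ('a, 'c, 'f, 'r) lstruct \<Rightarrow> bool" where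
  "is_Lstructure L M \<longleftrightarrow>
     carrier M \<noteq> {} \<and>
     Metric_space (carrier M) (sdist M) \<and>
     Metric_space.mcomplete (carrier M) (sdist M) \<and>
     (\<forall>x\<in>carrier M. \<forall>y\<in>carrier M. sdist M x y \<le> 1) \<and>
     (\<forall>c. cinterp M c \<in> carrier M) \<and>
     (\<forall>F xs ys. length xs = farity L F \<and> length ys = farity L F \<and>
        set xs \<subseteq> carrier M \<and> set ys \<subseteq> carrier M \<longrightarrow>
        finterp M F xs \<in> carrier M \<and>
        sdist M (finterp M F xs) (finterp M F ys) \<le> flip L F * list_dist (sdist M) xs ys) \<and>
     (\<forall>R xs ys. length xs = rarity L R \<and> length ys = rarity L R \<and>
        set xs \<subseteq> carrier M \<and> set ys \<subseteq> carrier M \<longrightarrow>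
        0 \<le> rinterp M R xs \<and> rinterp M R xs \<le> 1 \<and>
        rinterp M R xs - rinterp M R ys \<le> rlip L R * list_dist (sdist M) xs ys)"

fun eval_trm :: "('a, 'c, 'f, 'r) lstruct \<Rightarrow> (nat \<Rightarrow> 'a) \<Rightarrow> ('c, 'f) trm \<Rightarrow> 'a" where
  "eval_trm M a (Var n) = a n"
| "eval_trm M a (Const c) = cinterp M c"
| "eval_trm M a (Fn F ts) = finterp M F (map (eval_trm M a) ts)"

fun eval_fml :: "('a, 'c, 'f, 'r) lstruct \<Rightarrow> (nat \<Rightarrow> 'a) \<Rightarrow> ('c, 'f, 'r) afml \<Rightarrow> real" where
  "eval_fml M a One = 1"
| "eval_fml M a (Dist t u) = sdist M (eval_trm M a t) (eval_trm M a u)"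
| "eval_fml M a (Rel R ts) = rinterp M R (map (eval_trm M a) ts)"
| "eval_fml M a (Add \<phi> \<psi>) = eval_fml M a \<phi> + eval_fml M a \<psi>"
| "eval_fml M a (Scale r \<phi>) = r * eval_fml M a \<phi>"
| "eval_fml M a (FSup x \<phi>) = (SUP b\<in>carrier M. eval_fml M (a(x := b)) \<phi>)"
| "eval_fml M a (FInf x \<phi>) = (INF b\<in>carrier M. eval_fml M (a(x := b)) \<phi>)"

definition ultracharge :: "'i set \<Rightarrow> ('i set \<Rightarrow> real) \<Rightarrow> bool" where
  "ultracharge I \<mu> \<longleftrightarrow>
     \<mu> I = 1 \<and> (\<forall>A\<subseteq>I. 0 \<le> \<mu> A) \<and>
     (\<forall>A B. A \<subseteq> I \<and> B \<subseteq> I \<and> A \<inter> B = {} \<longrightarrow> \<mu> (A \<union> B) = \<mu> A + \<mu> B)"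

definition charge_integral :: "'i set \<Rightarrow> ('i set \<Rightarrow> real) \<Rightarrow> ('i \<Rightarrow> real) \<Rightarrow> real" where
  "charge_integral I \<mu> f =
     Sup {(\<Sum>A\<in>P. \<mu> A * (INF i\<in>A. f i)) | P. finite P \<and> partition_on I P}"

definition um_pdist :: "'i set \<Rightarrow> ('i set \<Rightarrow> real) \<Rightarrow> ('i \<Rightarrow> ('a, 'c, 'f, 'r) lstruct)
    \<Rightarrow> ('i \<Rightarrow> 'a) \<Rightarrow> ('i \<Rightarrow> 'a) \<Rightarrow> real" where
  "um_pdist I \<mu> Ms a b = charge_integral I \<mu> (\<lambda>i. sdist (Ms i) (a i) (b i))"

definition um_class :: "'i set \<Rightarrow> ('i set \<Rightarrow> real) \<Rightarrow> ('i \<Rightarrow> ('a, 'c, 'f, 'r) lstruct)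
    \<Rightarrow> ('i \<Rightarrow> 'a) \<Rightarrow> ('i \<Rightarrow> 'a) set" where
  "um_class I \<mu> Ms a =
     {b \<in> (\<Pi>\<^sub>E i\<in>I. carrier (Ms i)). um_pdist I \<mu> Ms a b = 0}"

definition um_rep :: "('i \<Rightarrow> 'a) set \<Rightarrow> 'i \<Rightarrow> 'a" where
  "um_rep X = (SOME a. a \<in> X)"

definition ultramean :: "'i set \<Rightarrow> ('i set \<Rightarrow> real) \<Rightarrow> ('i \<Rightarrow> ('a, 'c, 'f, 'r) lstruct)
    \<Rightarrow> (('i \<Rightarrow> 'a) set, 'c, 'f, 'r) lstruct" where
  "ultramean I \<mu> Ms =
    \<lparr> carrier = um_class I \<mu> Ms ` (\<Pi>\<^sub>E i\<in>I. carrier (Ms i)),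
      sdist = (\<lambda>X Y. um_pdist I \<mu> Ms (um_rep X) (um_rep Y)),
      cinterp = (\<lambda>c. um_class I \<mu> Ms (\<lambda>i\<in>I. cinterp (Ms i) c)),
      finterp = (\<lambda>F Xs. um_class I \<mu> Ms
                   (\<lambda>i\<in>I. finterp (Ms i) F (map (\<lambda>X. um_rep X i) Xs))),
      rinterp = (\<lambda>R Xs. charge_integral I \<mu>
                   (\<lambda>i. rinterp (Ms i) R (map (\<lambda>X. um_rep X i) Xs))) \<rparr>"

end

theory Submission
  imports Defs
begin


definition bddf :: "'i set \<Rightarrow> ('i \<Rightarrow> real) \<Rightarrow> bool" where
  "bddf I f \<longleftrightarrow> (\<exists>B. \<forall>i\<in>I. \<bar>f i\<bar> \<le> B)"

lemma bddfD: "bddf I f \<Longrightarrow> \<exists>B\<ge>0. \<forall>i\<in>I. \<bar>f i\<bar> \<le> B"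
  unfolding bddf_def by (meson abs_ge_zero dual_order.trans ex_in_conv)

lemma bddf_add: "bddf I f \<Longrightarrow> bddf I g \<Longrightarrow> bddf I (\<lambda>i. f i + g i)"
  unfolding bddf_def by (metis (no_types, opaque_lifting) abs_triangle_ineq add_mono order_trans)

lemma bddf_neg: "bddf I f \<Longrightarrow> bddf I (\<lambda>i. - f i)"
  unfolding bddf_def by simp

lemma bddf_const: "bddf I (\<lambda>i. c)"
  unfolding bddf_def by auto

lemma bddf_scale: "bddf I f \<Longrightarrow> bddf I (\<lambda>i. r * f i)"
  unfolding bddf_def by (metis abs_ge_zero abs_mult mult_left_mono)

lemma bddf_cong: "bddf I f \<Longrightarrow> (\<And>i. i \<in> I \<Longrightarrow> f i = g i) \<Longrightarrow> bddf I g"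
  unfolding bddf_def by auto

lemma bddf_sum_list: "(\<And>t. t \<in> set ts \<Longrightarrow> bddf I (h t)) \<Longrightarrow> bddf I (\<lambda>i. sum_list (map (\<lambda>t. h t i) ts))"
  by (induction ts) (auto intro: bddf_const bddf_add)

lemma bddf_bdd:
  assumes "bddf I f" "A \<subseteq> I"
  shows "bdd_below (f ` A)" "bdd_above (f ` A)"
  using assms unfolding bddf_def bdd_below_def bdd_above_def
  by (auto, meson abs_le_D2 minus_le_iff subsetD, meson abs_le_D1 subsetD)

lemma INF_neg_real: "(INF i\<in>A. - f i) = - (SUP i\<in>A. f i :: real)"
  by (simp add: Inf_real_def image_image)

locale uch =
  fixes I :: "'i set" and \<mu> :: "'i set \<Rightarrow> real"
  assumes uc: "ultracharge I \<mu>" and ne: "I \<noteq> {}"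
begin

definition fp where "fp P \<longleftrightarrow> finite P \<and> partition_on I P"
definition S where "S P f = (\<Sum>A\<in>P. \<mu> A * (INF i\<in>A. f i))"
definition U where "U P f = (\<Sum>A\<in>P. \<mu> A * (SUP i\<in>A. f i))"
abbreviation LL where "LL f \<equiv> charge_integral I \<mu> f"

lemma LL_def': "LL f = Sup {S P f | P. fp P}"
  unfolding charge_integral_def S_def fp_def by simp

lemma mu_nonneg: "A \<subseteq> I \<Longrightarrow> 0 \<le> \<mu> A" using uc unfolding ultracharge_def by auto
lemma mu_I: "\<mu> I = 1" using uc unfolding ultracharge_def by auto
lemma mu_add: "A \<subseteq> I \<Longrightarrow> B \<subseteq> I \<Longrightarrow> A \<inter> B = {} \<Longrightarrow> \<mu> (A \<union> B) = \<mu> A + \<mu> B"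
  using uc unfolding ultracharge_def by auto
lemma mu_empty: "\<mu> {} = 0" using mu_add[of "{}" "{}"] by simp

lemma mu_family:
  assumes "finite P" "\<And>A. A \<in> P \<Longrightarrow> g A \<subseteq> I"
    "\<And>A B. A \<in> P \<Longrightarrow> B \<in> P \<Longrightarrow> A \<noteq> B \<Longrightarrow> g A \<inter> g B = {}"
  shows "\<mu> (\<Union>A\<in>P. g A) = (\<Sum>A\<in>P. \<mu> (g A))"
  using assms
proof (induction P rule: finite_induct)
  case empty then show ?case by (simp add: mu_empty)
next
  case (insert x F)
  have "\<mu> (\<Union>A\<in>insert x F. g A) = \<mu> (g x \<union> (\<Union>A\<in>F. g A))" by simp
  also have "\<dots> = \<mu> (g x) + \<mu> (\<Union>A\<in>F. g A)"
  proof (intro mu_add)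
    show "g x \<inter> (\<Union>A\<in>F. g A) = {}"
    proof -
      have "g x \<inter> g A = {}" if "A \<in> F" for A
        using insert.prems(2)[of x A] insert.hyps that by auto
      then show ?thesis by blast
    qed
  qed (use insert.prems in auto)
  also have "\<dots> = \<mu> (g x) + (\<Sum>A\<in>F. \<mu> (g A))"
    using insert by simp
  finally show ?case using insert.hyps by simp
qed

lemma fp_split:
  assumes "fp P" "B \<subseteq> I"
  shows "\<mu> B = (\<Sum>A\<in>P. \<mu> (A \<inter> B))"
proof -
  have "B = (\<Union>A\<in>P. A \<inter> B)" using assms unfolding fp_def partition_on_def by auto
  moreover have "\<mu> (\<Union>A\<in>P. A \<inter> B) = (\<Sum>A\<in>P. \<mu> (A \<inter> B))"
    using assms unfolding fp_def partition_on_def disjoint_def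
    by (intro mu_family) (auto simp: disjnt_def)
  ultimately show ?thesis by simp
qed


lemma fp_sub: "fp P \<Longrightarrow> A \<in> P \<Longrightarrow> A \<subseteq> I"
  unfolding fp_def partition_on_def by auto
lemma fp_ne: "fp P \<Longrightarrow> A \<in> P \<Longrightarrow> A \<noteq> {}"
  unfolding fp_def partition_on_def by auto
lemma fp_fin: "fp P \<Longrightarrow> finite P" unfolding fp_def by auto
lemma fp_disj: "fp P \<Longrightarrow> A \<in> P \<Longrightarrow> B \<in> P \<Longrightarrow> x \<in> A \<Longrightarrow> x \<in> B \<Longrightarrow> A = B"
  unfolding fp_def partition_on_def disjoint_def disjnt_def by blast
lemma fp_cover: "fp P \<Longrightarrow> i \<in> I \<Longrightarrow> \<exists>A\<in>P. i \<in> A"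
  unfolding fp_def partition_on_def by auto
lemma fp_sum1: "fp P \<Longrightarrow> (\<Sum>A\<in>P. \<mu> A) = 1"
proof -
  assume P: "fp P"
  have "(\<Sum>A\<in>P. \<mu> (A \<inter> I)) = (\<Sum>A\<in>P. \<mu> A)"
    using fp_sub[OF P] by (intro sum.cong) (auto simp: Int_absorb2)
  then show ?thesis using fp_split[OF P, of I] mu_I by simp
qed
lemma fp_triv: "fp {I}" unfolding fp_def using ne by (simp add: partition_on_space)

lemma S_le_U:
  assumes f: "bddf I f" and P: "fp P" and Q: "fp Q"
  shows "S P f \<le> U Q f"
proof -
  have "S P f = (\<Sum>A\<in>P. \<Sum>B\<in>Q. \<mu> (B \<inter> A) * (INF i\<in>A. f i))"
    unfolding S_def using fp_split[OF Q fp_sub[OF P]] by (simp add: sum_distrib_right)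
  also have "\<dots> \<le> (\<Sum>A\<in>P. \<Sum>B\<in>Q. \<mu> (B \<inter> A) * (SUP i\<in>B. f i))"
  proof (intro sum_mono)
    fix A B assume A: "A \<in> P" and B: "B \<in> Q"
    show "\<mu> (B \<inter> A) * (INF i\<in>A. f i) \<le> \<mu> (B \<inter> A) * (SUP i\<in>B. f i)"
    proof (cases "B \<inter> A = {}")
      case True then show ?thesis by (simp add: mu_empty)
    next
      case False
      then obtain j where j: "j \<in> A" "j \<in> B" by auto
      have "(INF i\<in>A. f i) \<le> f j" using bddf_bdd[OF f fp_sub[OF P A]] j by (intro cINF_lower) auto
      also have "\<dots> \<le> (SUP i\<in>B. f i)" using bddf_bdd[OF f fp_sub[OF Q B]] j by (intro cSUP_upper) auto
      finally show ?thesis using fp_sub[OF Q B] by (intro mult_left_mono mu_nonneg) auto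
    qed
  qed
  also have "\<dots> = (\<Sum>B\<in>Q. \<Sum>A\<in>P. \<mu> (A \<inter> B) * (SUP i\<in>B. f i))"
    by (subst sum.swap) (simp add: Int_commute)
  also have "\<dots> = U Q f"
    unfolding U_def using fp_split[OF P fp_sub[OF Q]] by (simp add: sum_distrib_right)
  finally show ?thesis .
qed

lemma Sset_ne: "{S P f | P. fp P} \<noteq> {}" using fp_triv by auto
lemma Sset_bdd: "bddf I f \<Longrightarrow> bdd_above {S P f | P. fp P}"
  using S_le_U[OF _ _ fp_triv] unfolding bdd_above_def by blast

lemma S_le_LL: "bddf I f \<Longrightarrow> fp P \<Longrightarrow> S P f \<le> LL f"
  unfolding LL_def' by (rule cSup_upper) (auto intro: Sset_bdd)

lemma LL_le_U: "bddf I f \<Longrightarrow> fp Q \<Longrightarrow> LL f \<le> U Q f"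
  unfolding LL_def' by (rule cSup_least) (auto intro: S_le_U)


lemma approx:
  assumes f: "bddf I f" and e: "e > 0"
  shows "\<exists>P. fp P \<and> U P f - S P f \<le> e"
proof -
  obtain B where B: "B \<ge> 0" "\<And>i. i \<in> I \<Longrightarrow> \<bar>f i\<bar> \<le> B" using bddfD[OF f] by auto
  define h where "h i = \<lfloor>f i / e\<rfloor>" for i
  define P where "P = (\<lambda>k. {i\<in>I. h i = k}) ` (h ` I)"
  have "h ` I \<subseteq> {\<lfloor>-B/e\<rfloor>..\<lfloor>B/e\<rfloor>}"
  proof
    fix k assume "k \<in> h ` I"
    then obtain i where i: "i \<in> I" "k = h i" by auto
    have "-B \<le> f i" "f i \<le> B" using B(2)[OF i(1)] by auto
    then have "-B/e \<le> f i/e" "f i/e \<le> B/e" using e divide_right_mono less_imp_le by blast+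
    then show "k \<in> {\<lfloor>-B/e\<rfloor>..\<lfloor>B/e\<rfloor>}" unfolding i h_def by (auto intro: floor_mono)
  qed
  then have fin: "finite (h ` I)" by (rule finite_subset) simp
  have fpP: "fp P" unfolding fp_def P_def
  proof
    show "finite ((\<lambda>k. {i \<in> I. h i = k}) ` h ` I)" using fin by simp
    show "partition_on I ((\<lambda>k. {i \<in> I. h i = k}) ` h ` I)"
      by (rule partition_onI) (auto simp: disjnt_def)
  qed
  have osc: "(SUP i\<in>A. f i) - (INF i\<in>A. f i) \<le> e" if A: "A \<in> P" for A
  proof -
    obtain k where k: "k \<in> h ` I" "A = {i\<in>I. h i = k}" using A unfolding P_def by auto
    have Ane: "A \<noteq> {}" using k by auto
    have lo: "real_of_int k * e \<le> f i" and hi: "f i < (real_of_int k + 1) * e" if "i \<in> A" for i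
    proof -
      have "h i = k" using that k by auto
      then have "real_of_int k \<le> f i / e" "f i / e < real_of_int k + 1" unfolding h_def by linarith+
      then show "real_of_int k * e \<le> f i" "f i < (real_of_int k + 1) * e" using e
        by (auto simp: field_simps)
    qed
    have "(SUP i\<in>A. f i) \<le> (real_of_int k + 1) * e" using hi Ane by (intro cSUP_least) (auto intro: less_imp_le)
    moreover have "real_of_int k * e \<le> (INF i\<in>A. f i)" using lo Ane by (intro cINF_greatest) auto
    ultimately show ?thesis by (simp add: algebra_simps)
  qed
  have "U P f - S P f = (\<Sum>A\<in>P. \<mu> A * ((SUP i\<in>A. f i) - (INF i\<in>A. f i)))"
    unfolding U_def S_def by (simp add: sum_subtractf right_diff_distrib)
  also have "\<dots> \<le> (\<Sum>A\<in>P. \<mu> A * e)"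
    using osc fp_sub[OF fpP] by (intro sum_mono mult_left_mono mu_nonneg) auto
  also have "\<dots> = e" using fp_sum1[OF fpP] by (simp add: sum_distrib_right[symmetric])
  finally show ?thesis using fpP by blast
qed

lemma LL_neg: assumes f: "bddf I f" shows "LL (\<lambda>i. - f i) = - LL f"
proof (rule antisym)
  have SU: "S P (\<lambda>i. - f i) = - U P f" for P
    unfolding S_def U_def by (simp add: INF_neg_real sum_negf)
  show "LL (\<lambda>i. - f i) \<le> - LL f"
    unfolding LL_def'[of "\<lambda>i. - f i"] SU
    using LL_le_U[OF f] by (intro cSup_least) (use fp_triv in auto)
  have "- LL f \<le> LL (\<lambda>i. - f i) + e" if e: "e > 0" for e
  proof -
    obtain P where P: "fp P" "U P f - S P f \<le> e" using approx[OF f e] by auto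
    have "S P (\<lambda>i. - f i) \<le> LL (\<lambda>i. - f i)" using S_le_LL[OF bddf_neg[OF f] P(1)] .
    moreover have "S P f \<le> LL f" using S_le_LL[OF f P(1)] .
    ultimately show ?thesis using P(2) SU[of P] by linarith
  qed
  then show "- LL f \<le> LL (\<lambda>i. - f i)" by (rule field_le_epsilon)
qed

lemma LL_cong: "(\<And>i. i \<in> I \<Longrightarrow> f i = g i) \<Longrightarrow> LL f = LL g"
proof -
  assume fg: "\<And>i. i \<in> I \<Longrightarrow> f i = g i"
  have "S P f = S P g" if "fp P" for P
    unfolding S_def using fp_sub[OF that] fg by (intro sum.cong refl arg_cong2[where f="(*)"] INF_cong) auto
  then have "{S P f | P. fp P} = {S P g | P. fp P}" by (metis (full_types))
  then show ?thesis unfolding LL_def' by simp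
qed

lemma LL_const: "LL (\<lambda>i. c) = c"
proof -
  have "S P (\<lambda>i. c) = c" if "fp P" for P
  proof -
    have "S P (\<lambda>i. c) = (\<Sum>A\<in>P. \<mu> A * c)" unfolding S_def using fp_ne[OF that] by (intro sum.cong) auto
    also have "\<dots> = c" using fp_sum1[OF that] by (simp add: sum_distrib_right[symmetric])
    finally show ?thesis .
  qed
  then have "{S P (\<lambda>i. c) | P. fp P} = {c}" using fp_triv by (auto, metis)
  then show ?thesis unfolding LL_def' by simp
qed

lemma LL_mono:
  assumes f: "bddf I f" and g: "bddf I g" and le: "\<And>i. i \<in> I \<Longrightarrow> f i \<le> g i"
  shows "LL f \<le> LL g"
  unfolding LL_def'[of f]
proof (rule cSup_least)
  show "{S P f |P. fp P} \<noteq> {}" by (rule Sset_ne)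
  fix x assume "x \<in> {S P f |P. fp P}"
  then obtain P where P: "fp P" "x = S P f" by auto
  have "S P f \<le> S P g" unfolding S_def
  proof (intro sum_mono mult_left_mono)
    fix A assume A: "A \<in> P"
    show "(INF i\<in>A. f i) \<le> (INF i\<in>A. g i)"
    proof (rule cINF_greatest)
      show "A \<noteq> {}" using fp_ne[OF P(1) A] .
      fix i assume "i \<in> A"
      then have "(INF i\<in>A. f i) \<le> f i" using bddf_bdd[OF f fp_sub[OF P(1) A]] by (intro cINF_lower) auto
      also have "\<dots> \<le> g i" using le fp_sub[OF P(1) A] \<open>i \<in> A\<close> by auto
      finally show "(INF i\<in>A. f i) \<le> g i" .
    qed
    show "0 \<le> \<mu> A" using fp_sub[OF P(1) A] by (rule mu_nonneg)
  qed
  also have "\<dots> \<le> LL g" using S_le_LL[OF g P(1)] .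
  finally show "x \<le> LL g" using P by simp
qed


lemma superadd_S:
  assumes f: "bddf I f" and g: "bddf I g" and P: "fp P" and Q: "fp Q"
  shows "S P f + S Q g \<le> LL (\<lambda>i. f i + g i)"
proof -
  define k where "k C = \<mu> C * (INF i\<in>C. f i + g i)" for C
  define R0 where "R0 = (\<lambda>p. fst p \<inter> snd p) ` (P \<times> Q)"
  define R where "R = R0 - {{}}"
  have finP: "finite P" and finQ: "finite Q" using P Q by (auto dest: fp_fin)
  have "S P f = (\<Sum>A\<in>P. \<Sum>B\<in>Q. \<mu> (A \<inter> B) * (INF i\<in>A. f i))"
    unfolding S_def using fp_split[OF Q fp_sub[OF P]] by (simp add: sum_distrib_right Int_commute)
  moreover have "S Q g = (\<Sum>A\<in>P. \<Sum>B\<in>Q. \<mu> (A \<inter> B) * (INF i\<in>B. g i))"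
    unfolding S_def using fp_split[OF P fp_sub[OF Q]] by (subst sum.swap) (simp add: sum_distrib_right)
  ultimately have "S P f + S Q g = (\<Sum>A\<in>P. \<Sum>B\<in>Q. \<mu> (A \<inter> B) * ((INF i\<in>A. f i) + (INF i\<in>B. g i)))"
    by (simp add: sum.distrib[symmetric] distrib_left)
  also have "\<dots> \<le> (\<Sum>A\<in>P. \<Sum>B\<in>Q. k (A \<inter> B))"
  proof (intro sum_mono)
    fix A B assume A: "A \<in> P" and B: "B \<in> Q"
    show "\<mu> (A \<inter> B) * ((INF i\<in>A. f i) + (INF i\<in>B. g i)) \<le> k (A \<inter> B)"
    proof (cases "A \<inter> B = {}")
      case True then show ?thesis by (simp add: mu_empty k_def)
    next
      case False
      have "(INF i\<in>A. f i) + (INF i\<in>B. g i) \<le> (INF i\<in>A \<inter> B. f i + g i)"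
      proof (rule cINF_greatest)
        fix j assume j: "j \<in> A \<inter> B"
        have "(INF i\<in>A. f i) \<le> f j" using bddf_bdd[OF f fp_sub[OF P A]] j by (intro cINF_lower) auto
        moreover have "(INF i\<in>B. g i) \<le> g j" using bddf_bdd[OF g fp_sub[OF Q B]] j by (intro cINF_lower) auto
        ultimately show "(INF i\<in>A. f i) + (INF i\<in>B. g i) \<le> f j + g j" by simp
      qed (use False in auto)
      then show ?thesis unfolding k_def using fp_sub[OF P A] by (intro mult_left_mono mu_nonneg) auto
    qed
  qed
  also have "\<dots> = (\<Sum>p\<in>P \<times> Q. k (fst p \<inter> snd p))"
    by (subst sum.cartesian_product) (simp add: case_prod_beta)
  also have "\<dots> = sum k R0"
    unfolding R0_def
  proof (subst sum.reindex_nontrivial)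
    show "finite (P \<times> Q)" using finP finQ by simp
    fix x y assume x: "x \<in> P \<times> Q" and y: "y \<in> P \<times> Q" and xy: "x \<noteq> y"
      and eq: "fst x \<inter> snd x = fst y \<inter> snd y"
    have "fst x \<inter> snd x = {}"
    proof (rule ccontr)
      assume "fst x \<inter> snd x \<noteq> {}"
      then obtain j where "j \<in> fst x \<inter> snd x" by auto
      then have "fst x = fst y" "snd x = snd y" using eq x y fp_disj[OF P] fp_disj[OF Q]
        by (auto simp: mem_Times_iff) (metis IntE IntI)+
      then show False using xy by (simp add: prod_eq_iff)
    qed
    then show "k (fst x \<inter> snd x) = 0" by (simp add: k_def mu_empty)
  qed (simp add: comp_def)
  also have "\<dots> = sum k R"
    unfolding R_def using finP finQ unfolding R0_def
    by (intro sum.mono_neutral_right) (auto simp: k_def mu_empty)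
  also have "\<dots> = S R (\<lambda>i. f i + g i)" unfolding S_def k_def ..
  also have "\<dots> \<le> LL (\<lambda>i. f i + g i)"
  proof (rule S_le_LL[OF bddf_add[OF f g]])
    show "fp R" unfolding fp_def
    proof
      show "finite R" unfolding R_def R0_def using finP finQ by simp
      show "partition_on I R"
      proof (rule partition_onI)
        show "\<Union>R = I"
        proof
          show "\<Union>R \<subseteq> I" unfolding R_def R0_def using fp_sub[OF P] by fastforce
          show "I \<subseteq> \<Union>R"
          proof
            fix i assume i: "i \<in> I"
            obtain A B where "A \<in> P" "B \<in> Q" "i \<in> A" "i \<in> B" using fp_cover[OF P i] fp_cover[OF Q i] by auto
            then show "i \<in> \<Union>R" unfolding R_def R0_def
              by (auto intro!: UnionI[where X="A \<inter> B"] image_eqI[where x="(A,B)"])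
          qed
        qed
        fix p q assume p: "p \<in> R" and q: "q \<in> R" and pq: "p \<noteq> q"
        show "disjnt p q"
        proof (rule ccontr)
          assume "\<not> disjnt p q"
          then obtain j where j: "j \<in> p" "j \<in> q" by (auto simp: disjnt_def)
          obtain A B where AB: "A \<in> P" "B \<in> Q" "p = A \<inter> B" using p unfolding R_def R0_def by (auto simp: image_iff)
          obtain A' B' where AB': "A' \<in> P" "B' \<in> Q" "q = A' \<inter> B'" using q unfolding R_def R0_def by (auto simp: image_iff)
          have "A = A'" using fp_disj[OF P AB(1) AB'(1)] j AB AB' by auto
          moreover have "B = B'" using fp_disj[OF Q AB(2) AB'(2)] j AB AB' by auto
          ultimately show False using pq AB AB' by simp
        qed
      qed (simp add: R_def)
    qed
  qed
  finally show ?thesis .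
qed

lemma LL_superadd:
  assumes f: "bddf I f" and g: "bddf I g"
  shows "LL f + LL g \<le> LL (\<lambda>i. f i + g i)"
proof -
  have "LL f \<le> LL (\<lambda>i. f i + g i) - S Q g" if Q: "fp Q" for Q
    unfolding LL_def'[of f] using superadd_S[OF f g _ Q] by (intro cSup_least) (use fp_triv in \<open>auto simp: algebra_simps\<close>)
  then have "S Q g \<le> LL (\<lambda>i. f i + g i) - LL f" if Q: "fp Q" for Q
    using that by fastforce
  then have "LL g \<le> LL (\<lambda>i. f i + g i) - LL f"
    unfolding LL_def'[of g] by (intro cSup_least) (use fp_triv in auto)
  then show ?thesis by simp
qed

lemma LL_add:
  assumes f: "bddf I f" and g: "bddf I g"
  shows "LL (\<lambda>i. f i + g i) = LL f + LL g"
proof (rule antisym)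
  have "LL (\<lambda>i. - f i) + LL (\<lambda>i. - g i) \<le> LL (\<lambda>i. - f i + - g i)"
    by (rule LL_superadd[OF bddf_neg[OF f] bddf_neg[OF g]])
  also have "LL (\<lambda>i. - f i + - g i) = LL (\<lambda>i. - (f i + g i))" by simp
  also have "\<dots> = - LL (\<lambda>i. f i + g i)" by (rule LL_neg[OF bddf_add[OF f g]])
  finally show "LL (\<lambda>i. f i + g i) \<le> LL f + LL g" using LL_neg[OF f] LL_neg[OF g] by simp
qed (rule LL_superadd[OF f g])

lemma LL_diff:
  assumes f: "bddf I f" and g: "bddf I g"
  shows "LL (\<lambda>i. f i - g i) = LL f - LL g"
  using LL_add[OF f bddf_neg[OF g]] LL_neg[OF g] by simp

lemma LL_scale_pos:
  assumes f: "bddf I f" and r: "r > 0"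
  shows "LL (\<lambda>i. r * f i) = r * LL f"
proof -
  have INF_sc: "(INF i\<in>A. r * f i) = r * (INF i\<in>A. f i)" if A: "A \<subseteq> I" "A \<noteq> {}" for A
  proof (rule antisym)
    have "(INF i\<in>A. r * f i) / r \<le> f j" if j: "j \<in> A" for j
    proof -
      have "(INF i\<in>A. r * f i) \<le> r * f j"
        using bddf_bdd[OF bddf_scale[OF f] A(1)] j by (intro cINF_lower) auto
      then show ?thesis using r by (simp add: field_simps)
    qed
    then have "(INF i\<in>A. r * f i) / r \<le> (INF i\<in>A. f i)" using A by (intro cINF_greatest) auto
    then show "(INF i\<in>A. r * f i) \<le> r * (INF i\<in>A. f i)" using r by (simp add: field_simps)
    show "r * (INF i\<in>A. f i) \<le> (INF i\<in>A. r * f i)"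
    proof (rule cINF_greatest)
      fix j assume j: "j \<in> A"
      have "(INF i\<in>A. f i) \<le> f j" using bddf_bdd[OF f A(1)] j by (intro cINF_lower) auto
      then show "r * (INF i\<in>A. f i) \<le> r * f j" using r by simp
    qed (use A in auto)
  qed
  have SS: "S P (\<lambda>i. r * f i) = r * S P f" if "fp P" for P
    unfolding S_def using INF_sc fp_sub[OF that] fp_ne[OF that]
    by (simp add: sum_distrib_left mult.left_commute)
  have "{S P (\<lambda>i. r * f i) | P. fp P} = (\<lambda>x. r * x) ` {S P f | P. fp P}"
    using SS by (auto, metis)
  note eqset = this
  then have "LL (\<lambda>i. r * f i) = Sup ((\<lambda>x. r * x) ` {S P f | P. fp P})" unfolding LL_def' by simp
  also have "\<dots> = r * LL f"
  proof (rule antisym)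
    show "Sup ((\<lambda>x. r * x) ` {S P f | P. fp P}) \<le> r * LL f"
      using S_le_LL[OF f] r by (intro cSup_least) (use fp_triv in auto)
    have "LL f \<le> Sup ((\<lambda>x. r * x) ` {S P f | P. fp P}) / r"
      unfolding LL_def'[of f]
    proof (rule cSup_least[OF Sset_ne])
      fix x assume "x \<in> {S P f |P. fp P}"
      then have "r * x \<le> Sup ((\<lambda>x. r * x) ` {S P f | P. fp P})"
        using Sset_bdd[OF bddf_scale[OF f, of r]] unfolding eqset
        by (intro cSup_upper) auto
      then show "x \<le> Sup ((\<lambda>x. r * x) ` {S P f | P. fp P}) / r" using r by (simp add: field_simps)
    qed
    then show "r * LL f \<le> Sup ((\<lambda>x. r * x) ` {S P f | P. fp P})" using r by (simp add: field_simps)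
  qed
  finally show ?thesis .
qed

lemma LL_scale:
  assumes f: "bddf I f"
  shows "LL (\<lambda>i. r * f i) = r * LL f"
proof -
  consider "r > 0" | "r = 0" | "r < 0" by linarith
  then show ?thesis
  proof cases
    case 1 then show ?thesis using LL_scale_pos[OF f] by simp
  next
    case 2 then show ?thesis using LL_const[of 0] by simp
  next
    case 3
    have "LL (\<lambda>i. r * f i) = LL (\<lambda>i. - ((- r) * f i))" by simp
    also have "\<dots> = - LL (\<lambda>i. (- r) * f i)" by (rule LL_neg[OF bddf_scale[OF f]])
    also have "\<dots> = r * LL f" using LL_scale_pos[OF f, of "-r"] 3 by simp
    finally show ?thesis .
  qed
qed

lemma LL_sum_list:
  "(\<And>t. t \<in> set ts \<Longrightarrow> bddf I (h t)) \<Longrightarrow>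
     LL (\<lambda>i. sum_list (map (\<lambda>t. h t i) ts)) = sum_list (map (\<lambda>t. LL (h t)) ts)"
proof (induction ts)
  case Nil then show ?case using LL_const[of 0] by simp
next
  case (Cons t ts)
  have "LL (\<lambda>i. sum_list (map (\<lambda>t. h t i) (t # ts))) = LL (\<lambda>i. h t i + sum_list (map (\<lambda>t. h t i) ts))"
    by simp
  also have "\<dots> = LL (h t) + LL (\<lambda>i. sum_list (map (\<lambda>t. h t i) ts))"
    using Cons.prems by (intro LL_add bddf_sum_list) auto
  finally show ?case using Cons by simp
qed

lemma LL_nonneg: "bddf I f \<Longrightarrow> (\<And>i. i \<in> I \<Longrightarrow> 0 \<le> f i) \<Longrightarrow> 0 \<le> LL f"
  using LL_mono[of "\<lambda>i. 0" f] LL_const[of 0] bddf_const by metis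

end


fun fbnd :: "('c, 'f, 'r) afml \<Rightarrow> real" where
  "fbnd One = 1"
| "fbnd (Dist t u) = 1"
| "fbnd (Rel R ts) = 1"
| "fbnd (Add \<phi> \<psi>) = fbnd \<phi> + fbnd \<psi>"
| "fbnd (Scale r \<phi>) = \<bar>r\<bar> * fbnd \<phi>"
| "fbnd (FSup x \<phi>) = fbnd \<phi>"
| "fbnd (FInf x \<phi>) = fbnd \<phi>"

lemma abs_SUP_le:
  fixes g :: "'b \<Rightarrow> real"
  assumes "C \<noteq> {}" "\<And>b. b \<in> C \<Longrightarrow> \<bar>g b\<bar> \<le> B"
  shows "\<bar>SUP b\<in>C. g b\<bar> \<le> B" "bdd_above (g ` C)"
proof -
  show bdd: "bdd_above (g ` C)" using assms unfolding bdd_above_def by (auto dest!: abs_le_D1)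
  obtain b0 where b0: "b0 \<in> C" using assms by auto
  have "(SUP b\<in>C. g b) \<le> B" using assms by (intro cSUP_least) (auto dest: abs_le_D1)
  moreover have "g b0 \<le> (SUP b\<in>C. g b)" using bdd b0 by (intro cSUP_upper)
  moreover have "- B \<le> g b0" using assms(2)[OF b0] by linarith
  ultimately show "\<bar>SUP b\<in>C. g b\<bar> \<le> B" by linarith
qed

lemma abs_INF_le:
  fixes g :: "'b \<Rightarrow> real"
  assumes "C \<noteq> {}" "\<And>b. b \<in> C \<Longrightarrow> \<bar>g b\<bar> \<le> B"
  shows "\<bar>INF b\<in>C. g b\<bar> \<le> B" "bdd_below (g ` C)"
proof -
  show bdd: "bdd_below (g ` C)" using assms unfolding bdd_below_def
    by (auto, meson abs_le_D2 minus_le_iff)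
  obtain b0 where b0: "b0 \<in> C" using assms by auto
  have "- B \<le> (INF b\<in>C. g b)" using assms by (intro cINF_greatest) (auto, meson abs_le_D2 minus_le_iff)
  moreover have "(INF b\<in>C. g b) \<le> g b0" using bdd b0 by (intro cINF_lower)
  moreover have "g b0 \<le> B" using assms(2)[OF b0] by linarith
  ultimately show "\<bar>INF b\<in>C. g b\<bar> \<le> B" by linarith
qed

lemma list_dist_map: "list_dist d (map f ts) (map g ts) = sum_list (map (\<lambda>t. d (f t) (g t)) ts)"
  by (induction ts) (auto simp: list_dist_def)

locale umS = uch I \<mu> for I :: "'i set" and \<mu> +
  fixes L :: "('f, 'r) lang" and Ms :: "'i \<Rightarrow> ('a, 'c, 'f, 'r) lstruct"
  assumes LL: "lipschitz_language L" and str: "\<forall>i\<in>I. is_Lstructure L (Ms i)"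
begin

abbreviation PI where "PI \<equiv> (\<Pi>\<^sub>E i\<in>I. carrier (Ms i))"
abbreviation cls where "cls \<equiv> um_class I \<mu> Ms"
abbreviation pd where "pd \<equiv> um_pdist I \<mu> Ms"
abbreviation Mu where "Mu \<equiv> ultramean I \<mu> Ms"
abbreviation rep where "rep X \<equiv> um_rep X"

lemma ms: "i \<in> I \<Longrightarrow> Metric_space (carrier (Ms i)) (sdist (Ms i))"
  using str unfolding is_Lstructure_def by auto
lemma d1: "i \<in> I \<Longrightarrow> x \<in> carrier (Ms i) \<Longrightarrow> y \<in> carrier (Ms i) \<Longrightarrow> sdist (Ms i) x y \<le> 1"
  using str unfolding is_Lstructure_def by auto
lemma d0: "i \<in> I \<Longrightarrow> 0 \<le> sdist (Ms i) x y"
  using Metric_space.nonneg[OF ms] by auto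
lemma cne: "i \<in> I \<Longrightarrow> carrier (Ms i) \<noteq> {}"
  using str unfolding is_Lstructure_def by auto
lemma cin: "i \<in> I \<Longrightarrow> cinterp (Ms i) c \<in> carrier (Ms i)"
  using str unfolding is_Lstructure_def by auto
lemma fin: "i \<in> I \<Longrightarrow> length xs = farity L F \<Longrightarrow> set xs \<subseteq> carrier (Ms i) \<Longrightarrow> finterp (Ms i) F xs \<in> carrier (Ms i)"
  using str unfolding is_Lstructure_def by blast
lemma flip: "i \<in> I \<Longrightarrow> length xs = farity L F \<Longrightarrow> length ys = farity L F \<Longrightarrow>
   set xs \<subseteq> carrier (Ms i) \<Longrightarrow> set ys \<subseteq> carrier (Ms i) \<Longrightarrow>
   sdist (Ms i) (finterp (Ms i) F xs) (finterp (Ms i) F ys) \<le> flip L F * list_dist (sdist (Ms i)) xs ys"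
  using str unfolding is_Lstructure_def by blast
lemma rb: "i \<in> I \<Longrightarrow> length xs = rarity L R \<Longrightarrow> set xs \<subseteq> carrier (Ms i) \<Longrightarrow>
   0 \<le> rinterp (Ms i) R xs \<and> rinterp (Ms i) R xs \<le> 1"
  using str unfolding is_Lstructure_def by blast
lemma rlip: "i \<in> I \<Longrightarrow> length xs = rarity L R \<Longrightarrow> length ys = rarity L R \<Longrightarrow>
   set xs \<subseteq> carrier (Ms i) \<Longrightarrow> set ys \<subseteq> carrier (Ms i) \<Longrightarrow>
   rinterp (Ms i) R xs - rinterp (Ms i) R ys \<le> rlip L R * list_dist (sdist (Ms i)) xs ys"
  using str unfolding is_Lstructure_def by blast

lemma PI_ne: "PI \<noteq> {}" using cne by (simp add: PiE_eq_empty_iff)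

lemma bddf_d: "a \<in> PI \<Longrightarrow> b \<in> PI \<Longrightarrow> bddf I (\<lambda>i. sdist (Ms i) (a i) (b i))"
  unfolding bddf_def using d0 d1 by (intro exI[of _ 1]) (auto simp: PiE_iff)

lemma pd_def': "pd a b = LL (\<lambda>i. sdist (Ms i) (a i) (b i))" unfolding um_pdist_def ..

lemma pd_nonneg: "a \<in> PI \<Longrightarrow> b \<in> PI \<Longrightarrow> 0 \<le> pd a b"
  unfolding pd_def' using d0 bddf_d by (intro LL_nonneg) auto

lemma pd_refl: "a \<in> PI \<Longrightarrow> pd a a = 0"
  unfolding pd_def' using LL_const[of 0] Metric_space.mdist_zero[OF ms]
  by (metis (no_types, lifting) LL_cong PiE_iff)

lemma pd_comm: "a \<in> PI \<Longrightarrow> b \<in> PI \<Longrightarrow> pd a b = pd b a"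
  unfolding pd_def' using Metric_space.commute[OF ms] by (intro LL_cong) auto

lemma pd_tri: "a \<in> PI \<Longrightarrow> b \<in> PI \<Longrightarrow> c \<in> PI \<Longrightarrow> pd a c \<le> pd a b + pd b c"
  unfolding pd_def'
  apply (subst LL_add[symmetric])
    apply (rule bddf_d; assumption)+
  apply (rule LL_mono)
    apply (rule bddf_d; assumption)
   apply (rule bddf_add; rule bddf_d; assumption)
  using Metric_space.triangle[OF ms] by (auto simp: PiE_iff)

lemma cls_mem: "a \<in> PI \<Longrightarrow> a \<in> cls a"
  unfolding um_class_def using pd_refl by auto

lemma cls_eq: "a \<in> PI \<Longrightarrow> b \<in> PI \<Longrightarrow> pd a b = 0 \<Longrightarrow> cls a = cls b"
  unfolding um_class_def
proof (intro Collect_cong conj_cong refl)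
  fix c assume a: "a \<in> PI" and b: "b \<in> PI" and ab: "pd a b = 0" and c: "c \<in> PI"
  show "(pd a c = 0) = (pd b c = 0)"
    using pd_tri[OF a b c] pd_tri[OF b a c] pd_comm[OF a b] ab pd_nonneg[OF a c] pd_nonneg[OF b c] by auto
qed

lemma rep_cls: "a \<in> PI \<Longrightarrow> rep (cls a) \<in> PI \<and> pd a (rep (cls a)) = 0"
proof -
  assume a: "a \<in> PI"
  have "rep (cls a) \<in> cls a" unfolding um_rep_def using cls_mem[OF a] by (rule someI[of "\<lambda>x. x \<in> cls a"])
  then show ?thesis unfolding um_class_def by auto
qed

lemma pd_rep: "a \<in> PI \<Longrightarrow> b \<in> PI \<Longrightarrow> pd (rep (cls a)) (rep (cls b)) = pd a b"
proof -
  assume a: "a \<in> PI" and b: "b \<in> PI"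
  note ra = rep_cls[OF a] and rb = rep_cls[OF b]
  show ?thesis
    using pd_tri[OF ra[THEN conjunct1] a b] pd_tri[OF ra[THEN conjunct1] b rb[THEN conjunct1]]
      pd_tri[OF a ra[THEN conjunct1] b] pd_tri[OF ra[THEN conjunct1] rb[THEN conjunct1] b]
      pd_comm[OF a ra[THEN conjunct1]] pd_comm[OF b rb[THEN conjunct1]] ra rb
    by linarith
qed

lemma lip_zero:
  assumes "\<And>t. t \<in> set ts \<Longrightarrow> x t \<in> PI \<and> y t \<in> PI \<and> pd (x t) (y t) = 0"
  shows "LL (\<lambda>i. list_dist (sdist (Ms i)) (map (\<lambda>t. x t i) ts) (map (\<lambda>t. y t i) ts)) = 0"
    "bddf I (\<lambda>i. list_dist (sdist (Ms i)) (map (\<lambda>t. x t i) ts) (map (\<lambda>t. y t i) ts))"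
proof -
  have b: "bddf I (\<lambda>i. sdist (Ms i) (x t i) (y t i))" if "t \<in> set ts" for t
    using assms[OF that] bddf_d by auto
  show "LL (\<lambda>i. list_dist (sdist (Ms i)) (map (\<lambda>t. x t i) ts) (map (\<lambda>t. y t i) ts)) = 0"
    unfolding list_dist_map
    apply (subst LL_sum_list[of ts "\<lambda>t i. sdist (Ms i) (x t i) (y t i)"])
    using b apply blast
  proof -
    have "\<forall>t\<in>set ts. LL (\<lambda>i. sdist (Ms i) (x t i) (y t i)) = 0"
      using assms unfolding pd_def' by auto
    then show "sum_list (map (\<lambda>t. LL (\<lambda>i. sdist (Ms i) (x t i) (y t i))) ts) = 0"
      by (induction ts) auto
  qed
  show "bddf I (\<lambda>i. list_dist (sdist (Ms i)) (map (\<lambda>t. x t i) ts) (map (\<lambda>t. y t i) ts))"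
    unfolding list_dist_map using b by (rule bddf_sum_list)
qed

lemma trm_carrier:
  "i \<in> I \<Longrightarrow> wf_trm L t \<Longrightarrow> (\<And>k. asg k \<in> carrier (Ms i)) \<Longrightarrow> eval_trm (Ms i) asg t \<in> carrier (Ms i)"
proof (induction t)
  case (Fn F ts) then show ?case by (auto intro!: fin)
qed (auto intro: cin)

definition evt where "evt a t = (\<lambda>i\<in>I. eval_trm (Ms i) (\<lambda>k. a k i) t)"

lemma evt_PI: "(\<And>k. a k \<in> PI) \<Longrightarrow> wf_trm L t \<Longrightarrow> evt a t \<in> PI"
  unfolding evt_def using trm_carrier by (auto simp: PiE_iff)

lemma trm_eval:
  "(\<And>k. a k \<in> PI) \<Longrightarrow> wf_trm L t \<Longrightarrow> eval_trm Mu (\<lambda>k. cls (a k)) t = cls (evt a t)"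
proof (induction t)
  case (Var n)
  then show ?case unfolding evt_def eval_trm.simps using PiE_restrict[of "a n"] by metis
next
  case (Const c)
  then show ?case by (simp add: evt_def ultramean_def restrict_def)
next
  case (Fn F ts)
  have wf: "length ts = farity L F" "\<And>t. t \<in> set ts \<Longrightarrow> wf_trm L t" using Fn.prems by auto
  have IH: "map (eval_trm Mu (\<lambda>k. cls (a k))) ts = map (\<lambda>t. cls (evt a t)) ts"
    using Fn wf by auto
  define r where "r t = rep (cls (evt a t))" for t
  have r: "r t \<in> PI" "pd (evt a t) (r t) = 0" if "t \<in> set ts" for t
    using rep_cls[OF evt_PI[OF Fn.prems(1) wf(2)[OF that]]] unfolding r_def by auto
  have "eval_trm Mu (\<lambda>k. cls (a k)) (Fn F ts) = finterp Mu F (map (\<lambda>t. cls (evt a t)) ts)"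
    by (simp only: eval_trm.simps IH)
  also have "\<dots> = cls (\<lambda>i\<in>I. finterp (Ms i) F (map (\<lambda>t. r t i) ts))"
    unfolding ultramean_def r_def by (simp add: o_def)
  also have "\<dots> = cls (\<lambda>i\<in>I. finterp (Ms i) F (map (\<lambda>t. evt a t i) ts))"
  proof (rule cls_eq)
    have car: "r t i \<in> carrier (Ms i)" "evt a t i \<in> carrier (Ms i)" if "t \<in> set ts" "i \<in> I" for t i
      using r(1) evt_PI[OF Fn.prems(1) wf(2)] that by (auto simp: PiE_iff)
    show P1: "(\<lambda>i\<in>I. finterp (Ms i) F (map (\<lambda>t. r t i) ts)) \<in> PI"
      using car wf by (auto intro!: fin simp: PiE_iff)
    show P2: "(\<lambda>i\<in>I. finterp (Ms i) F (map (\<lambda>t. evt a t i) ts)) \<in> PI"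
      using car wf by (auto intro!: fin simp: PiE_iff)
    have lzp: "r t \<in> PI \<and> evt a t \<in> PI \<and> pd (r t) (evt a t) = 0" if t: "t \<in> set ts" for t
    proof -
      have e: "evt a t \<in> PI" by (rule evt_PI[OF Fn.prems(1) wf(2)[OF t]])
      show ?thesis using r[OF t] e pd_comm[OF e r(1)[OF t]] by simp
    qed
    note lz = lip_zero[of ts r "evt a", OF lzp]
    have "pd (\<lambda>i\<in>I. finterp (Ms i) F (map (\<lambda>t. r t i) ts)) (\<lambda>i\<in>I. finterp (Ms i) F (map (\<lambda>t. evt a t i) ts))
       \<le> LL (\<lambda>i. flip L F * list_dist (sdist (Ms i)) (map (\<lambda>t. r t i) ts) (map (\<lambda>t. evt a t i) ts))"
      unfolding pd_def'
    proof (rule LL_mono[OF bddf_d[OF P1 P2] bddf_scale[OF lz(2)]])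
      fix i assume i: "i \<in> I"
      have "sdist (Ms i) (finterp (Ms i) F (map (\<lambda>t. r t i) ts)) (finterp (Ms i) F (map (\<lambda>t. evt a t i) ts))
         \<le> flip L F * list_dist (sdist (Ms i)) (map (\<lambda>t. r t i) ts) (map (\<lambda>t. evt a t i) ts)"
        by (rule flip) (use car wf i in auto)
      then show "sdist (Ms i) ((\<lambda>i\<in>I. finterp (Ms i) F (map (\<lambda>t. r t i) ts)) i) ((\<lambda>i\<in>I. finterp (Ms i) F (map (\<lambda>t. evt a t i) ts)) i)
         \<le> flip L F * list_dist (sdist (Ms i)) (map (\<lambda>t. r t i) ts) (map (\<lambda>t. evt a t i) ts)"
        using i by simp
    qed
    also have "\<dots> = 0" using LL_scale[OF lz(2)] lz(1) by simp
    finally show "pd (\<lambda>i\<in>I. finterp (Ms i) F (map (\<lambda>t. r t i) ts)) (\<lambda>i\<in>I. finterp (Ms i) F (map (\<lambda>t. evt a t i) ts)) = 0"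
      using pd_nonneg[OF P1 P2] by linarith
  qed
  also have "(\<lambda>i\<in>I. finterp (Ms i) F (map (\<lambda>t. evt a t i) ts)) = evt a (Fn F ts)"
    unfolding evt_def by (intro restrict_ext) (simp add: comp_def)
  finally show ?case .
qed


end

context umS begin
lemma eval_bound:
  "i \<in> I \<Longrightarrow> wf_fml L \<phi> \<Longrightarrow> (\<And>k. asg k \<in> carrier (Ms i)) \<Longrightarrow>
    \<bar>eval_fml (Ms i) asg \<phi>\<bar> \<le> fbnd \<phi>"
proof (induction \<phi> arbitrary: asg)
  case (Dist t u)
  have "eval_trm (Ms i) asg t \<in> carrier (Ms i)" "eval_trm (Ms i) asg u \<in> carrier (Ms i)"
    using Dist by (auto intro!: trm_carrier)
  then show ?case using d0 d1 Dist.prems(1) by auto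
next
  case (Rel R ts)
  have wfr: "length ts = rarity L R" "\<And>t. t \<in> set ts \<Longrightarrow> wf_trm L t" using Rel.prems by auto
  have "set (map (eval_trm (Ms i) asg) ts) \<subseteq> carrier (Ms i)"
  proof
    fix y assume "y \<in> set (map (eval_trm (Ms i) asg) ts)"
    then obtain t where t: "t \<in> set ts" "y = eval_trm (Ms i) asg t" by auto
    show "y \<in> carrier (Ms i)" unfolding t(2) by (rule trm_carrier[OF Rel.prems(1) wfr(2)[OF t(1)] Rel.prems(3)])
  qed
  then have "0 \<le> rinterp (Ms i) R (map (eval_trm (Ms i) asg) ts) \<and> rinterp (Ms i) R (map (eval_trm (Ms i) asg) ts) \<le> 1"
    using rb[OF Rel.prems(1)] wfr(1) by simp
  then show ?case by simp
next
  case (Add \<phi> \<psi>)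
  have "\<bar>eval_fml (Ms i) asg \<phi>\<bar> \<le> fbnd \<phi>" "\<bar>eval_fml (Ms i) asg \<psi>\<bar> \<le> fbnd \<psi>"
    using Add by auto
  then show ?case using abs_triangle_ineq[of "eval_fml (Ms i) asg \<phi>" "eval_fml (Ms i) asg \<psi>"] by simp
next
  case (Scale r \<phi>)
  have "\<bar>eval_fml (Ms i) asg \<phi>\<bar> \<le> fbnd \<phi>" using Scale by auto
  then show ?case by (simp add: abs_mult mult_left_mono)
next
  case (FSup x \<phi>)
  show ?case unfolding eval_fml.simps fbnd.simps
  proof (rule abs_SUP_le(1)[OF cne[OF FSup.prems(1)]])
    fix b assume b: "b \<in> carrier (Ms i)"
    show "\<bar>eval_fml (Ms i) (asg(x := b)) \<phi>\<bar> \<le> fbnd \<phi>"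
      by (rule FSup.IH) (use FSup.prems b in auto)
  qed
next
  case (FInf x \<phi>)
  show ?case unfolding eval_fml.simps fbnd.simps
  proof (rule abs_INF_le(1)[OF cne[OF FInf.prems(1)]])
    fix b assume b: "b \<in> carrier (Ms i)"
    show "\<bar>eval_fml (Ms i) (asg(x := b)) \<phi>\<bar> \<le> fbnd \<phi>"
      by (rule FInf.IH) (use FInf.prems b in auto)
  qed
qed simp

lemma carrier_Mu: "carrier Mu = cls ` PI" by (simp add: ultramean_def)

lemma bddf_diff: "bddf I f \<Longrightarrow> bddf I g \<Longrightarrow> bddf I (\<lambda>i. f i - g i)"
  using bddf_add[OF _ bddf_neg, of I f g] by simp

lemma eval_bddf:
  "wf_fml L \<phi> \<Longrightarrow> (\<And>k. a k \<in> PI) \<Longrightarrow> bddf I (\<lambda>i. eval_fml (Ms i) (\<lambda>k. a k i) \<phi>)"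
  unfolding bddf_def
proof (intro exI[of _ "fbnd \<phi>"] ballI)
  fix i assume i: "i \<in> I" and wf: "wf_fml L \<phi>" and a: "\<And>k. a k \<in> PI"
  show "\<bar>eval_fml (Ms i) (\<lambda>k. a k i) \<phi>\<bar> \<le> fbnd \<phi>"
  proof (rule eval_bound[OF i wf])
    fix k show "a k i \<in> carrier (Ms i)" using a[of k] i by (simp add: PiE_iff)
  qed
qed

lemma fml_eval:
  "wf_fml L \<phi> \<Longrightarrow> (\<And>k. a k \<in> PI) \<Longrightarrow>
    eval_fml Mu (\<lambda>k. cls (a k)) \<phi> = LL (\<lambda>i. eval_fml (Ms i) (\<lambda>k. a k i) \<phi>)"
proof (induction \<phi> arbitrary: a)
  case One
  then show ?case using LL_const[of 1] by simp
next
  case (Dist t u)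
  have wf: "wf_trm L t" "wf_trm L u" using Dist by auto
  have "eval_fml Mu (\<lambda>k. cls (a k)) (Dist t u) = sdist Mu (cls (evt a t)) (cls (evt a u))"
    using trm_eval[of a, OF Dist.prems(2) wf(1)] trm_eval[of a, OF Dist.prems(2) wf(2)] by simp
  also have "\<dots> = pd (rep (cls (evt a t))) (rep (cls (evt a u)))"
    unfolding ultramean_def by simp
  also have "\<dots> = pd (evt a t) (evt a u)"
    by (rule pd_rep[OF evt_PI[OF Dist.prems(2) wf(1)] evt_PI[OF Dist.prems(2) wf(2)]])
  also have "\<dots> = LL (\<lambda>i. eval_fml (Ms i) (\<lambda>k. a k i) (Dist t u))"
    unfolding pd_def' by (intro LL_cong) (simp add: evt_def)
  finally show ?case .
next
  case (Rel R ts)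
  have wf: "length ts = rarity L R" "\<And>t. t \<in> set ts \<Longrightarrow> wf_trm L t" using Rel by auto
  define r where "r t = rep (cls (evt a t))" for t
  have e: "evt a t \<in> PI" if "t \<in> set ts" for t using evt_PI[OF Rel.prems(2) wf(2)[OF that]] .
  have r: "r t \<in> PI" "pd (evt a t) (r t) = 0" if "t \<in> set ts" for t
    using rep_cls[OF e[OF that]] unfolding r_def by auto
  have car: "r t i \<in> carrier (Ms i)" "evt a t i \<in> carrier (Ms i)" if "t \<in> set ts" "i \<in> I" for t i
    using r(1) e that by (auto simp: PiE_iff)
  have lzp1: "r t \<in> PI \<and> evt a t \<in> PI \<and> pd (r t) (evt a t) = 0" if t: "t \<in> set ts" for t
    using r[OF t] e[OF t] pd_comm[OF e[OF t] r(1)[OF t]] by simp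
  have lzp2: "evt a t \<in> PI \<and> r t \<in> PI \<and> pd (evt a t) (r t) = 0" if t: "t \<in> set ts" for t
    using r[OF t] e[OF t] by simp
  note lz1 = lip_zero[of ts r "evt a", OF lzp1] and lz2 = lip_zero[of ts "evt a" r, OF lzp2]
  define f where "f i = rinterp (Ms i) R (map (\<lambda>t. r t i) ts)" for i
  define g where "g i = rinterp (Ms i) R (map (\<lambda>t. evt a t i) ts)" for i
  have bf: "bddf I f" unfolding bddf_def f_def
  proof (intro exI[of _ 1] ballI)
    fix i assume i: "i \<in> I"
    have "0 \<le> rinterp (Ms i) R (map (\<lambda>t. r t i) ts) \<and> rinterp (Ms i) R (map (\<lambda>t. r t i) ts) \<le> 1"
      by (rule rb[OF i]) (use car wf i in auto)
    then show "\<bar>rinterp (Ms i) R (map (\<lambda>t. r t i) ts)\<bar> \<le> 1" by simp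
  qed
  have bg: "bddf I g" unfolding bddf_def g_def
  proof (intro exI[of _ 1] ballI)
    fix i assume i: "i \<in> I"
    have "0 \<le> rinterp (Ms i) R (map (\<lambda>t. evt a t i) ts) \<and> rinterp (Ms i) R (map (\<lambda>t. evt a t i) ts) \<le> 1"
      by (rule rb[OF i]) (use car wf i in auto)
    then show "\<bar>rinterp (Ms i) R (map (\<lambda>t. evt a t i) ts)\<bar> \<le> 1" by simp
  qed
  have "eval_fml Mu (\<lambda>k. cls (a k)) (Rel R ts) = rinterp Mu R (map (\<lambda>t. cls (evt a t)) ts)"
  proof -
    have "map (eval_trm Mu (\<lambda>k. cls (a k))) ts = map (\<lambda>t. cls (evt a t)) ts"
      by (rule map_cong[OF refl]) (rule trm_eval[of a, OF Rel.prems(2) wf(2)])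
    then show ?thesis by (simp only: eval_fml.simps)
  qed
  also have "\<dots> = LL f" unfolding ultramean_def f_def r_def by (simp add: o_def)
  also have "\<dots> = LL g"
  proof -
    have "LL f - LL g = LL (\<lambda>i. f i - g i)" using LL_diff[OF bf bg] by simp
    also have "\<dots> \<le> LL (\<lambda>i. rlip L R * list_dist (sdist (Ms i)) (map (\<lambda>t. r t i) ts) (map (\<lambda>t. evt a t i) ts))"
    proof (rule LL_mono[OF bddf_diff[OF bf bg] bddf_scale[OF lz1(2)]])
      fix i assume i: "i \<in> I"
      show "f i - g i \<le> rlip L R * list_dist (sdist (Ms i)) (map (\<lambda>t. r t i) ts) (map (\<lambda>t. evt a t i) ts)"
        unfolding f_def g_def by (rule rlip[OF i]) (use car wf i in auto)
    qed
    also have "\<dots> = 0" using LL_scale[OF lz1(2)] lz1(1) by simp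
    finally have 1: "LL f \<le> LL g" by simp
    have "LL g - LL f = LL (\<lambda>i. g i - f i)" using LL_diff[OF bg bf] by simp
    also have "\<dots> \<le> LL (\<lambda>i. rlip L R * list_dist (sdist (Ms i)) (map (\<lambda>t. evt a t i) ts) (map (\<lambda>t. r t i) ts))"
    proof (rule LL_mono[OF bddf_diff[OF bg bf] bddf_scale[OF lz2(2)]])
      fix i assume i: "i \<in> I"
      show "g i - f i \<le> rlip L R * list_dist (sdist (Ms i)) (map (\<lambda>t. evt a t i) ts) (map (\<lambda>t. r t i) ts)"
        unfolding f_def g_def by (rule rlip[OF i]) (use car wf i in auto)
    qed
    also have "\<dots> = 0" using LL_scale[OF lz2(2)] lz2(1) by simp
    finally have 2: "LL g \<le> LL f" by simp
    from 1 2 show ?thesis by simp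
  qed
  also have "\<dots> = LL (\<lambda>i. eval_fml (Ms i) (\<lambda>k. a k i) (Rel R ts))"
    unfolding g_def by (intro LL_cong) (simp add: evt_def comp_def)
  finally show ?case .
next
  case (Add \<phi> \<psi>)
  have wf: "wf_fml L \<phi>" "wf_fml L \<psi>" using Add.prems by auto
  have "eval_fml Mu (\<lambda>k. cls (a k)) (Add \<phi> \<psi>) = LL (\<lambda>i. eval_fml (Ms i) (\<lambda>k. a k i) \<phi>) + LL (\<lambda>i. eval_fml (Ms i) (\<lambda>k. a k i) \<psi>)"
    using Add.IH(1)[OF wf(1) Add.prems(2)] Add.IH(2)[OF wf(2) Add.prems(2)] by simp
  also have "\<dots> = LL (\<lambda>i. eval_fml (Ms i) (\<lambda>k. a k i) (Add \<phi> \<psi>))"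
    using LL_add[OF eval_bddf[OF wf(1) Add.prems(2)] eval_bddf[OF wf(2) Add.prems(2)]] by simp
  finally show ?case .
next
  case (Scale r \<phi>)
  have wf: "wf_fml L \<phi>" using Scale.prems by auto
  have "eval_fml Mu (\<lambda>k. cls (a k)) (Scale r \<phi>) = r * LL (\<lambda>i. eval_fml (Ms i) (\<lambda>k. a k i) \<phi>)"
    using Scale.IH[OF wf Scale.prems(2)] by simp
  also have "\<dots> = LL (\<lambda>i. eval_fml (Ms i) (\<lambda>k. a k i) (Scale r \<phi>))"
    using LL_scale[OF eval_bddf[OF wf Scale.prems(2)], of r] by simp
  finally show ?case .
next
  case (FSup x \<psi>)
  have wf: "wf_fml L \<psi>" using FSup by simp
  define g where "g b i = eval_fml (Ms i) ((\<lambda>k. a k i)(x := b i)) \<psi>" for b i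
  define F where "F i = eval_fml (Ms i) (\<lambda>k. a k i) (FSup x \<psi>)" for i
  have bF: "bddf I F" unfolding F_def using eval_bddf FSup.prems by blast
  have upd: "(\<lambda>k. (a(x := b)) k i) = (\<lambda>k. a k i)(x := b i)" for b i by auto
  have bg: "bddf I (g b)" if b: "b \<in> PI" for b
    using eval_bddf[OF wf, of "a(x := b)"] FSup.prems(2) b unfolding g_def upd by auto
  have IH: "eval_fml Mu (\<lambda>k. cls ((a(x := b)) k)) \<psi> = LL (g b)" if b: "b \<in> PI" for b
    using FSup.IH[OF wf, of "a(x := b)"] FSup.prems(2) b unfolding g_def upd by auto
  have "eval_fml Mu (\<lambda>k. cls (a k)) (FSup x \<psi>) = (SUP B\<in>cls ` PI. eval_fml Mu ((\<lambda>k. cls (a k))(x := B)) \<psi>)"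
    by (simp only: eval_fml.simps carrier_Mu)
  also have "\<dots> = (SUP b\<in>PI. eval_fml Mu ((\<lambda>k. cls (a k))(x := cls b)) \<psi>)"
    by (simp only: image_image)
  also have "\<dots> = (SUP b\<in>PI. eval_fml Mu (\<lambda>k. cls ((a(x := b)) k)) \<psi>)"
  proof (rule SUP_cong[OF refl])
    fix b show "eval_fml Mu ((\<lambda>k. cls (a k))(x := cls b)) \<psi> = eval_fml Mu (\<lambda>k. cls ((a(x := b)) k)) \<psi>"
      by (rule arg_cong[where f="\<lambda>v. eval_fml Mu v \<psi>"]) (auto simp: fun_eq_iff)
  qed
  also have "\<dots> = (SUP b\<in>PI. LL (g b))" by (rule SUP_cong[OF refl]) (rule IH)
  also have "\<dots> = LL F"
  proof (rule antisym)
    have gF: "g b i \<le> F i" if "b \<in> PI" "i \<in> I" for b i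
    proof -
      have bnd: "\<bar>eval_fml (Ms i) ((\<lambda>k. a k i)(x := c)) \<psi>\<bar> \<le> fbnd \<psi>" if "c \<in> carrier (Ms i)" for c
        using eval_bound[OF \<open>i \<in> I\<close> wf] FSup.prems(2) that \<open>i \<in> I\<close> by (auto simp: PiE_iff)
      have "bdd_above ((\<lambda>c. eval_fml (Ms i) ((\<lambda>k. a k i)(x := c)) \<psi>) ` carrier (Ms i))"
        using bnd by (intro abs_SUP_le(2)[OF cne[OF \<open>i \<in> I\<close>]]) auto
      then show ?thesis unfolding g_def F_def using that by (auto intro!: cSUP_upper simp: PiE_iff)
    qed
    show "(SUP b\<in>PI. LL (g b)) \<le> LL F"
      using PI_ne gF by (intro cSUP_least) (auto intro!: LL_mono bg bF)
    have bdd: "bdd_above ((\<lambda>b. LL (g b)) ` PI)"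
      unfolding bdd_above_def using gF by (intro exI[of _ "LL F"]) (auto intro!: LL_mono bg bF)
    have "LL F - e \<le> (SUP b\<in>PI. LL (g b))" if e: "e > 0" for e
    proof -
      have ex: "\<exists>c\<in>carrier (Ms i). F i - e < eval_fml (Ms i) ((\<lambda>k. a k i)(x := c)) \<psi>" if i: "i \<in> I" for i
      proof -
        have bnd: "\<bar>eval_fml (Ms i) ((\<lambda>k. a k i)(x := c)) \<psi>\<bar> \<le> fbnd \<psi>" if "c \<in> carrier (Ms i)" for c
          using eval_bound[OF i wf] FSup.prems(2) that i by (auto simp: PiE_iff)
        have "bdd_above ((\<lambda>c. eval_fml (Ms i) ((\<lambda>k. a k i)(x := c)) \<psi>) ` carrier (Ms i))"
          using bnd by (intro abs_SUP_le(2)[OF cne[OF i]]) auto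
        moreover have "F i - e < F i" using e by simp
        ultimately show ?thesis unfolding F_def using cne[OF i] by (simp add: less_cSUP_iff)
      qed
      define b where "b = (\<lambda>i\<in>I. SOME c. c \<in> carrier (Ms i) \<and> F i - e < eval_fml (Ms i) ((\<lambda>k. a k i)(x := c)) \<psi>)"
      have bi: "b i \<in> carrier (Ms i) \<and> F i - e < g b i" if i: "i \<in> I" for i
        unfolding g_def using someI_ex[OF ex[OF i, unfolded Bex_def]] i by (simp add: b_def)
      have bPI: "b \<in> PI" unfolding b_def using bi by (auto simp: PiE_iff b_def)
      have "LL F - e = LL (\<lambda>i. F i + (- e))" using LL_add[OF bF bddf_const[of I "- e"]] LL_const[of "- e"] by simp
      also have "\<dots> \<le> LL (g b)" using bi by (intro LL_mono bddf_add bF bddf_const bg bPI) (auto intro: less_imp_le)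
      also have "\<dots> \<le> (SUP b\<in>PI. LL (g b))" using bdd bPI by (intro cSUP_upper)
      finally show ?thesis .
    qed
    then show "LL F \<le> (SUP b\<in>PI. LL (g b))"
      by (metis diff_le_eq field_le_epsilon add.commute)
  qed
  finally show ?case unfolding F_def .
next
  case (FInf x \<psi>)
  have wf: "wf_fml L \<psi>" using FInf by simp
  define g where "g b i = eval_fml (Ms i) ((\<lambda>k. a k i)(x := b i)) \<psi>" for b i
  define F where "F i = eval_fml (Ms i) (\<lambda>k. a k i) (FInf x \<psi>)" for i
  have bF: "bddf I F" unfolding F_def using eval_bddf FInf.prems by blast
  have upd: "(\<lambda>k. (a(x := b)) k i) = (\<lambda>k. a k i)(x := b i)" for b i by auto
  have bg: "bddf I (g b)" if b: "b \<in> PI" for b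
    using eval_bddf[OF wf, of "a(x := b)"] FInf.prems(2) b unfolding g_def upd by auto
  have IH: "eval_fml Mu (\<lambda>k. cls ((a(x := b)) k)) \<psi> = LL (g b)" if b: "b \<in> PI" for b
    using FInf.IH[OF wf, of "a(x := b)"] FInf.prems(2) b unfolding g_def upd by auto
  have "eval_fml Mu (\<lambda>k. cls (a k)) (FInf x \<psi>) = (INF B\<in>cls ` PI. eval_fml Mu ((\<lambda>k. cls (a k))(x := B)) \<psi>)"
    by (simp only: eval_fml.simps carrier_Mu)
  also have "\<dots> = (INF b\<in>PI. eval_fml Mu ((\<lambda>k. cls (a k))(x := cls b)) \<psi>)"
    by (simp only: image_image)
  also have "\<dots> = (INF b\<in>PI. eval_fml Mu (\<lambda>k. cls ((a(x := b)) k)) \<psi>)"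
  proof (rule INF_cong[OF refl])
    fix b show "eval_fml Mu ((\<lambda>k. cls (a k))(x := cls b)) \<psi> = eval_fml Mu (\<lambda>k. cls ((a(x := b)) k)) \<psi>"
      by (rule arg_cong[where f="\<lambda>v. eval_fml Mu v \<psi>"]) (auto simp: fun_eq_iff)
  qed
  also have "\<dots> = (INF b\<in>PI. LL (g b))" by (rule INF_cong[OF refl]) (rule IH)
  also have "\<dots> = LL F"
  proof (rule antisym[rotated])
    have gF: "F i \<le> g b i" if "b \<in> PI" "i \<in> I" for b i
    proof -
      have bnd: "\<bar>eval_fml (Ms i) ((\<lambda>k. a k i)(x := c)) \<psi>\<bar> \<le> fbnd \<psi>" if "c \<in> carrier (Ms i)" for c
        using eval_bound[OF \<open>i \<in> I\<close> wf] FInf.prems(2) that \<open>i \<in> I\<close> by (auto simp: PiE_iff)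
      have "bdd_below ((\<lambda>c. eval_fml (Ms i) ((\<lambda>k. a k i)(x := c)) \<psi>) ` carrier (Ms i))"
        using bnd by (intro abs_INF_le(2)[OF cne[OF \<open>i \<in> I\<close>]]) auto
      then show ?thesis unfolding g_def F_def using that by (auto intro!: cINF_lower simp: PiE_iff)
    qed
    show "LL F \<le> (INF b\<in>PI. LL (g b))"
      using PI_ne gF by (intro cINF_greatest) (auto intro!: LL_mono bg bF)
    have bdd: "bdd_below ((\<lambda>b. LL (g b)) ` PI)"
      unfolding bdd_below_def using gF by (intro exI[of _ "LL F"]) (auto intro!: LL_mono bg bF)
    have "(INF b\<in>PI. LL (g b)) \<le> LL F + e" if e: "e > 0" for e
    proof -
      have ex: "\<exists>c\<in>carrier (Ms i). eval_fml (Ms i) ((\<lambda>k. a k i)(x := c)) \<psi> < F i + e" if i: "i \<in> I" for i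
      proof -
        have bnd: "\<bar>eval_fml (Ms i) ((\<lambda>k. a k i)(x := c)) \<psi>\<bar> \<le> fbnd \<psi>" if "c \<in> carrier (Ms i)" for c
          using eval_bound[OF i wf] FInf.prems(2) that i by (auto simp: PiE_iff)
        have "bdd_below ((\<lambda>c. eval_fml (Ms i) ((\<lambda>k. a k i)(x := c)) \<psi>) ` carrier (Ms i))"
          using bnd by (intro abs_INF_le(2)[OF cne[OF i]]) auto
        moreover have "F i < F i + e" using e by simp
        ultimately show ?thesis unfolding F_def eval_fml.simps using cINF_less_iff[OF cne[OF i]] by blast
      qed
      define b where "b = (\<lambda>i\<in>I. SOME c. c \<in> carrier (Ms i) \<and> eval_fml (Ms i) ((\<lambda>k. a k i)(x := c)) \<psi> < F i + e)"
      have bi: "b i \<in> carrier (Ms i) \<and> g b i < F i + e" if i: "i \<in> I" for i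
        unfolding g_def using someI_ex[OF ex[OF i, unfolded Bex_def]] i by (simp add: b_def)
      have bPI: "b \<in> PI" unfolding b_def using bi by (auto simp: PiE_iff b_def)
      have "(INF b\<in>PI. LL (g b)) \<le> LL (g b)" using bdd bPI by (intro cINF_lower)
      also have "\<dots> \<le> LL (\<lambda>i. F i + e)" using bi by (intro LL_mono bddf_add bF bddf_const bg bPI) (auto intro: less_imp_le)
      also have "\<dots> = LL F + e" using LL_add[OF bF bddf_const[of I e]] LL_const[of e] by simp
      finally show ?thesis .
    qed
    then show "(INF b\<in>PI. LL (g b)) \<le> LL F"
      by (rule field_le_epsilon)
  qed
  finally show ?case unfolding F_def .
qed

end

theorem mainTheorem1:
  fixes L :: "('f, 'r) lang"
    and I :: "'i set" and \<mu> :: "'i set \<Rightarrow> real"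
    and Ms :: "'i \<Rightarrow> ('a, 'c, 'f, 'r) lstruct"
    and \<phi> :: "('c, 'f, 'r) afml"
    and a :: "nat \<Rightarrow> 'i \<Rightarrow> 'a"
  assumes "lipschitz_language L"
    and "I \<noteq> {}"
    and "ultracharge I \<mu>"
    and "\<forall>i\<in>I. is_Lstructure L (Ms i)"
    and "wf_fml L \<phi>"
    and "\<forall>k. a k \<in> (\<Pi>\<^sub>E i\<in>I. carrier (Ms i))"
  shows "eval_fml (ultramean I \<mu> Ms) (\<lambda>k. um_class I \<mu> Ms (a k)) \<phi>
           = charge_integral I \<mu> (\<lambda>i. eval_fml (Ms i) (\<lambda>k. a k i) \<phi>)"
proof -
  interpret umS I \<mu> L Ms
    using assms by (unfold_locales) auto
  show ?thesis using fml_eval[OF assms(5)] assms(6) by blast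
qed

end
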